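(* (2-cut with spill in MRL.) Let $R_1,R_2\subseteq\mathcal{R}$ be such that $\overline{R_1}$ and $\overline{R_2}$ are disjoint. For all sequents $\Gamma_1,\Gamma_2$ and every formula $A$ of MRL: if $\Gamma_1, R_1{:}A$ and $\Gamma_2, R_2{:}A$ are both derivable in MRL, then $\Gamma_1,\Gamma_2,(R_1\cap R_2){:}A$ is derivable in MRL.
   Context: Fix a nonempty set $\mathcal{R}$ (the set of roles). For $R\subseteq\mathcal{R}$ write $\overline{R}=\mathcal{R}\setminus R$. An ultrafilter $\mathcal{U}$ on $\mathcal{R}$ is a set of subsets of $\mathcal{R}$ such that $\mathcal{R}\in\mathcal{U}$; $R_1\in\mathcal{U}$ and $R_1\subseteq R_2$ imply $R_2\in\mathcal{U}$; $R_1,R_2\in\mathcal{U}$ imply $R_1\cap R_2\in\mathcal{U}$; and for every $R\subseteq\mathcal{R}$, $R\in\mathcal{U}$ or $\overline{R}\in\mathcal{U}$. An endomorphism is any function $f:\mathcal{R}\to\mathcal{R}$, and $f^{-1}(R)$ denotes the preimage of $R$. Fix a first-order language of terms $t$ with variables $x$, and a collection of primitive (atomic) formulas $a$ (which may contain terms). Formulas of MRL: $A ::= a \mid \neg_f(A) \mid A_1\wedge_{\mathcal{U}} A_2 \mid A\supset_{f,\mathcal{U}} B \mid \forall_{\mathcal{U}}(\lambda x.A)$, with $f$ an endomorphism and $\mathcal{U}$ an ultrafilter on $\mathcal{R}$; $x$ is bound in $\forall_{\mathcal{U}}(\lambda x.A)$, and $A[t/x]$ is capture-avoiding substitution. An i-formula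 is a pair $R{:}A$ with $R\subseteq\mathcal{R}$ and $A$ a formula; a sequent is a finite multiset of i-formulas, and comma denotes multiset union. Derivability in MRL is given by the rules (premises $\Rightarrow$ conclusion, $\Gamma,\Gamma_1,\Gamma_2$ arbitrary sequents): (Id) $\Gamma, R_1{:}a,\ldots,R_n{:}a$ is derivable whenever $n\ge1$ and $R_1,\ldots,R_n$ are pairwise disjoint with union $\mathcal{R}$; (Weaken) $\Gamma,R{:}A,R{:}A \Rightarrow \Gamma,R{:}A$; ($\neg$) $\Gamma, f^{-1}(R){:}A \Rightarrow \Gamma, R{:}\neg_f(A)$; ($\wedge$-neg-l) if $R\notin\mathcal{U}$: $\Gamma,R{:}A\Rightarrow\Gamma,R{:}A\wedge_{\mathcal{U}}B$; ($\wedge$-neg-r) if $R\notin\mathcal{U}$: $\Gamma,R{:}B\Rightarrow\Gamma,R{:}A\wedge_{\mathcal{U}}B$; ($\wedge$-pos) if $R\in\mathcal{U}$: $(\Gamma,R{:}A;\ \Gamma,R{:}B)\Rightarrow\Gamma,R{:}A\wedge_{\mathcal{U}}B$; ($\supset$-neg) if $R\notin\mathcal{U}$: $\Gamma,f^{-1}(R){:}A,R{:}B\Rightarrow\Gamma,R{:}A\supset_{f,\mathcal{U}}B$; ($\supset$-pos) if $R\in\mathcal{U}$: $(\Gamma_1,f^{-1}(R){:}A;\ \Gamma_2,R{:}B)\Rightarrow\Gamma_1,\Gamma_2,R{:}A\supset_{f,\mathcal{U}}B$; ($\forall$-neg) if $R\notin\mathcal{U}$ and $t$ is a term: $\Gamma,R{:}A[t/x]\Rightarrow\Gamma,R{:}\forall_{\mathcal{U}}(\lambda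 x.A)$; ($\forall$-pos) if $R\in\mathcal{U}$ and $x$ has no free occurrence in $\Gamma$: $\Gamma,R{:}A\Rightarrow\Gamma,R{:}\forall_{\mathcal{U}}(\lambda x.A)$. A sequent is derivable in MRL if it is the conclusion of a finite derivation tree built from these rules. *)

theory Defs
  imports Main "HOL-Library.Multiset"
begin

text \<open>First-order terms: free (named) variables, bound variables (de Bruijn
indices, only occurring under a quantifier) and function applications.\<close>
datatype ('f, 'v) trm = FVar 'v | BVar nat | Fn 'f "('f, 'v) trm list"

primrec open_trm :: "nat \<Rightarrow> ('f, 'v) trm \<Rightarrow> ('f, 'v) trm \<Rightarrow> ('f, 'v) trm" where
  "open_trm k u (FVar x) = FVar x"
| "open_trm k u (BVar i) = (if i = k then u else BVar i)"
| "open_trm k u (Fn f ts) = Fn f (map (open_trm k u) ts)"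

primrec fv_trm :: "('f, 'v) trm \<Rightarrow> 'v set" where
  "fv_trm (FVar x) = {x}"
| "fv_trm (BVar i) = {}"
| "fv_trm (Fn f ts) = \<Union> (set (map fv_trm ts))"

primrec bvs_trm :: "('f, 'v) trm \<Rightarrow> nat set" where
  "bvs_trm (FVar x) = {}"
| "bvs_trm (BVar i) = {i}"
| "bvs_trm (Fn f ts) = \<Union> (set (map bvs_trm ts))"

definition closed_trm :: "('f, 'v) trm \<Rightarrow> bool" where
  "closed_trm t \<longleftrightarrow> bvs_trm t = {}"

text \<open>Formulas: atoms (predicate applied to terms), \<not>_f, \<and>_U,
 \<supset>_{f,U}, \<forall>_U; the quantifier binds de Bruijn index 0.\<close>
datatype ('r, 'f, 'v, 'p) fm =
    Atom 'p "('f, 'v) trm list"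
  | Neg "'r \<Rightarrow> 'r" "('r, 'f, 'v, 'p) fm"
  | Conj "'r set set" "('r, 'f, 'v, 'p) fm" "('r, 'f, 'v, 'p) fm"
  | Imp "'r \<Rightarrow> 'r" "'r set set" "('r, 'f, 'v, 'p) fm" "('r, 'f, 'v, 'p) fm"
  | Forall "'r set set" "('r, 'f, 'v, 'p) fm"

text \<open>open_fm k u A: replace bound variable k by the term u
 (this realises the capture-avoiding substitution A[u/x]).\<close>
primrec open_fm :: "nat \<Rightarrow> ('f, 'v) trm \<Rightarrow> ('r, 'f, 'v, 'p) fm \<Rightarrow> ('r, 'f, 'v, 'p) fm" where
  "open_fm k u (Atom p ts) = Atom p (map (open_trm k u) ts)"
| "open_fm k u (Neg f A) = Neg f (open_fm k u A)"
| "open_fm k u (Conj U A B) = Conj U (open_fm k u A) (open_fm k u B)"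
| "open_fm k u (Imp f U A B) = Imp f U (open_fm k u A) (open_fm k u B)"
| "open_fm k u (Forall U A) = Forall U (open_fm (Suc k) u A)"

primrec fv_fm :: "('r, 'f, 'v, 'p) fm \<Rightarrow> 'v set" where
  "fv_fm (Atom p ts) = \<Union> (set (map fv_trm ts))"
| "fv_fm (Neg f A) = fv_fm A"
| "fv_fm (Conj U A B) = fv_fm A \<union> fv_fm B"
| "fv_fm (Imp f U A B) = fv_fm A \<union> fv_fm B"
| "fv_fm (Forall U A) = fv_fm A"

primrec lc_at :: "nat \<Rightarrow> ('r, 'f, 'v, 'p) fm \<Rightarrow> bool" where
  "lc_at k (Atom p ts) = (\<forall>t\<in>set ts. \<forall>i\<in>bvs_trm t. i < k)"
| "lc_at k (Neg f A) = lc_at k A"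
| "lc_at k (Conj U A B) = (lc_at k A \<and> lc_at k B)"
| "lc_at k (Imp f U A B) = (lc_at k A \<and> lc_at k B)"
| "lc_at k (Forall U A) = lc_at (Suc k) A"

definition ultrafilter_on_roles :: "'r set set \<Rightarrow> bool" where
  "ultrafilter_on_roles U \<longleftrightarrow>
     UNIV \<in> U
   \<and> (\<forall>R1 R2. R1 \<in> U \<and> R1 \<subseteq> R2 \<longrightarrow> R2 \<in> U)
   \<and> (\<forall>R1 R2. R1 \<in> U \<and> R2 \<in> U \<longrightarrow> R1 \<inter> R2 \<in> U)
   \<and> (\<forall>R. R \<in> U \<or> - R \<in> U)"

primrec ultra_fm :: "('r, 'f, 'v, 'p) fm \<Rightarrow> bool" where
  "ultra_fm (Atom p ts) = True"
| "ultra_fm (Neg f A) = ultra_fm A"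
| "ultra_fm (Conj U A B) = (ultrafilter_on_roles U \<and> ultra_fm A \<and> ultra_fm B)"
| "ultra_fm (Imp f U A B) = (ultrafilter_on_roles U \<and> ultra_fm A \<and> ultra_fm B)"
| "ultra_fm (Forall U A) = (ultrafilter_on_roles U \<and> ultra_fm A)"

text \<open>A formula of MRL: no dangling bound variables, and every decoration is an ultrafilter.\<close>
definition wf_fm :: "('r, 'f, 'v, 'p) fm \<Rightarrow> bool" where
  "wf_fm A \<longleftrightarrow> lc_at 0 A \<and> ultra_fm A"

type_synonym ('r, 'f, 'v, 'p) seq = "('r set \<times> ('r, 'f, 'v, 'p) fm) multiset"

definition wf_seq :: "('r, 'f, 'v, 'p) seq \<Rightarrow> bool" where
  "wf_seq \<Gamma> \<longleftrightarrow> (\<forall>x \<in># \<Gamma>. wf_fm (snd x))"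

definition fv_seq :: "('r, 'f, 'v, 'p) seq \<Rightarrow> 'v set" where
  "fv_seq \<Gamma> = \<Union> ((fv_fm \<circ> snd) ` set_mset \<Gamma>)"

inductive derivable :: "('r, 'f, 'v, 'p) seq \<Rightarrow> bool" where
  Id: "\<lbrakk> Rs \<noteq> [];
         \<forall>i<length Rs. \<forall>j<length Rs. i \<noteq> j \<longrightarrow> Rs ! i \<inter> Rs ! j = {};
         \<Union> (set Rs) = UNIV \<rbrakk>
       \<Longrightarrow> derivable (\<Gamma> + mset (map (\<lambda>R. (R, Atom p ts)) Rs))"
| Weaken: "derivable (\<Gamma> + {#(R, A), (R, A)#}) \<Longrightarrow> derivable (\<Gamma> + {#(R, A)#})"
| NegR: "derivable (\<Gamma> + {#(f -` R, A)#}) \<Longrightarrow> derivable (\<Gamma> + {#(R, Neg f A)#})"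
| ConjNegL: "\<lbrakk> R \<notin> U; derivable (\<Gamma> + {#(R, A)#}) \<rbrakk>
       \<Longrightarrow> derivable (\<Gamma> + {#(R, Conj U A B)#})"
| ConjNegR: "\<lbrakk> R \<notin> U; derivable (\<Gamma> + {#(R, B)#}) \<rbrakk>
       \<Longrightarrow> derivable (\<Gamma> + {#(R, Conj U A B)#})"
| ConjPos: "\<lbrakk> R \<in> U; derivable (\<Gamma> + {#(R, A)#}); derivable (\<Gamma> + {#(R, B)#}) \<rbrakk>
       \<Longrightarrow> derivable (\<Gamma> + {#(R, Conj U A B)#})"
| ImpNeg: "\<lbrakk> R \<notin> U; derivable (\<Gamma> + {#(f -` R, A), (R, B)#}) \<rbrakk>
       \<Longrightarrow> derivable (\<Gamma> + {#(R, Imp f U A B)#})"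
| ImpPos: "\<lbrakk> R \<in> U; derivable (\<Gamma>1 + {#(f -` R, A)#}); derivable (\<Gamma>2 + {#(R, B)#}) \<rbrakk>
       \<Longrightarrow> derivable (\<Gamma>1 + \<Gamma>2 + {#(R, Imp f U A B)#})"
| AllNeg: "\<lbrakk> R \<notin> U; closed_trm t; derivable (\<Gamma> + {#(R, open_fm 0 t A)#}) \<rbrakk>
       \<Longrightarrow> derivable (\<Gamma> + {#(R, Forall U A)#})"
| AllPos: "\<lbrakk> R \<in> U; x \<notin> fv_seq \<Gamma>; x \<notin> fv_fm A;
            derivable (\<Gamma> + {#(R, open_fm 0 (FVar x) A)#}) \<rbrakk>
       \<Longrightarrow> derivable (\<Gamma> + {#(R, Forall U A)#})"

end

theory Submission
  imports Defs
begin


primrec st :: "('v \<Rightarrow> ('f, 'v) trm) \<Rightarrow> ('f, 'v) trm \<Rightarrow> ('f, 'v) trm" where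
  "st \<sigma> (FVar x) = \<sigma> x"
| "st \<sigma> (BVar i) = BVar i"
| "st \<sigma> (Fn f ts) = Fn f (map (st \<sigma>) ts)"

primrec sf :: "('v \<Rightarrow> ('f, 'v) trm) \<Rightarrow> ('r, 'f, 'v, 'p) fm \<Rightarrow> ('r, 'f, 'v, 'p) fm" where
  "sf \<sigma> (Atom p ts) = Atom p (map (st \<sigma>) ts)"
| "sf \<sigma> (Neg f A) = Neg f (sf \<sigma> A)"
| "sf \<sigma> (Conj U A B) = Conj U (sf \<sigma> A) (sf \<sigma> B)"
| "sf \<sigma> (Imp f U A B) = Imp f U (sf \<sigma> A) (sf \<sigma> B)"
| "sf \<sigma> (Forall U A) = Forall U (sf \<sigma> A)"

definition ss :: "('v \<Rightarrow> ('f, 'v) trm) \<Rightarrow> ('r, 'f, 'v, 'p) seq \<Rightarrow> ('r, 'f, 'v, 'p) seq" where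
  "ss \<sigma> G = image_mset (\<lambda>x. (fst x, sf \<sigma> (snd x))) G"

definition cv :: "('v \<Rightarrow> ('f, 'v) trm) \<Rightarrow> bool" where
  "cv \<sigma> \<longleftrightarrow> (\<forall>x. bvs_trm (\<sigma> x) = {})"

lemma open_trm_nobv: "k \<notin> bvs_trm t \<Longrightarrow> open_trm k u t = t"
  by (induction t) (auto simp: map_idI)

lemma bvs_st: "cv \<sigma> \<Longrightarrow> bvs_trm (st \<sigma> t) = bvs_trm t"
  by (induction t) (auto simp: cv_def)

lemma st_open: "cv \<sigma> \<Longrightarrow> st \<sigma> (open_trm k u t) = open_trm k (st \<sigma> u) (st \<sigma> t)"
  by (induction t) (auto simp: cv_def open_trm_nobv)

lemma sf_open: "cv \<sigma> \<Longrightarrow> sf \<sigma> (open_fm k u A) = open_fm k (st \<sigma> u) (sf \<sigma> A)"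
  by (induction A arbitrary: k) (auto simp: st_open)

lemma st_cong: "(\<forall>x\<in>fv_trm t. \<sigma> x = \<sigma>' x) \<Longrightarrow> st \<sigma> t = st \<sigma>' t"
  by (induction t) auto

lemma sf_cong: "(\<forall>x\<in>fv_fm A. \<sigma> x = \<sigma>' x) \<Longrightarrow> sf \<sigma> A = sf \<sigma>' A"
  by (induction A) (auto intro: st_cong)

lemma st_id: "st FVar t = t"
  by (induction t) (auto simp: map_idI)

lemma sf_id: "sf FVar A = A"
  by (induction A) (auto simp: st_id map_idI)

lemma sf_fresh: "x \<notin> fv_fm A \<Longrightarrow> sf (FVar(x := t)) A = A"
proof -
  assume "x \<notin> fv_fm A"
  then have "sf (FVar(x := t)) A = sf FVar A" by (intro sf_cong) auto
  then show ?thesis by (simp add: sf_id)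
qed

lemma ss_fresh: "x \<notin> fv_seq G \<Longrightarrow> ss (FVar(x := t)) G = G"
  unfolding ss_def fv_seq_def
  by (induction G) (auto simp: sf_fresh)

lemma ss_cong: "(\<forall>x\<in>fv_seq G. \<sigma> x = \<sigma>' x) \<Longrightarrow> ss \<sigma> G = ss \<sigma>' G"
  unfolding ss_def fv_seq_def
  by (induction G) (auto intro: sf_cong)

lemma finite_fv_trm: "finite (fv_trm t)"
  by (induction t) auto

lemma finite_fv_fm: "finite (fv_fm A)"
  by (induction A) (auto simp: finite_fv_trm)

lemma finite_fv_seq: "finite (fv_seq G)"
  unfolding fv_seq_def by (auto simp: finite_fv_fm)

lemma fv_seq_simps[simp]:
  "fv_seq (G + H) = fv_seq G \<union> fv_seq H"
  "fv_seq (add_mset x G) = fv_fm (snd x) \<union> fv_seq G"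
  "fv_seq {#} = {}"
  by (auto simp: fv_seq_def)

lemma ss_simps[simp]:
  "ss \<sigma> (G + H) = ss \<sigma> G + ss \<sigma> H"
  "ss \<sigma> (add_mset x G) = add_mset (fst x, sf \<sigma> (snd x)) (ss \<sigma> G)"
  "ss \<sigma> {#} = {#}"
  by (auto simp: ss_def)

lemma fresh_ex: "infinite (UNIV :: 'v set) \<Longrightarrow> finite (S :: 'v set) \<Longrightarrow> \<exists>z. z \<notin> S"
  using ex_new_if_finite by blast

inductive dh :: "nat \<Rightarrow> ('r, 'f, 'v, 'p) seq \<Rightarrow> bool" where
  hId: "\<lbrakk> Rs \<noteq> [];
         \<forall>i<length Rs. \<forall>j<length Rs. i \<noteq> j \<longrightarrow> Rs ! i \<inter> Rs ! j = {};
         \<Union> (set Rs) = UNIV \<rbrakk>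
       \<Longrightarrow> dh n (\<Gamma> + mset (map (\<lambda>R. (R, Atom p ts)) Rs))"
| hWeaken: "dh n (\<Gamma> + {#(R, A), (R, A)#}) \<Longrightarrow> dh (Suc n) (\<Gamma> + {#(R, A)#})"
| hNegR: "dh n (\<Gamma> + {#(f -` R, A)#}) \<Longrightarrow> dh (Suc n) (\<Gamma> + {#(R, Neg f A)#})"
| hConjNegL: "\<lbrakk> R \<notin> U; dh n (\<Gamma> + {#(R, A)#}) \<rbrakk>
       \<Longrightarrow> dh (Suc n) (\<Gamma> + {#(R, Conj U A B)#})"
| hConjNegR: "\<lbrakk> R \<notin> U; dh n (\<Gamma> + {#(R, B)#}) \<rbrakk>
       \<Longrightarrow> dh (Suc n) (\<Gamma> + {#(R, Conj U A B)#})"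
| hConjPos: "\<lbrakk> R \<in> U; dh n (\<Gamma> + {#(R, A)#}); dh m (\<Gamma> + {#(R, B)#}) \<rbrakk>
       \<Longrightarrow> dh (Suc (max n m)) (\<Gamma> + {#(R, Conj U A B)#})"
| hImpNeg: "\<lbrakk> R \<notin> U; dh n (\<Gamma> + {#(f -` R, A), (R, B)#}) \<rbrakk>
       \<Longrightarrow> dh (Suc n) (\<Gamma> + {#(R, Imp f U A B)#})"
| hImpPos: "\<lbrakk> R \<in> U; dh n (\<Gamma>1 + {#(f -` R, A)#}); dh m (\<Gamma>2 + {#(R, B)#}) \<rbrakk>
       \<Longrightarrow> dh (Suc (max n m)) (\<Gamma>1 + \<Gamma>2 + {#(R, Imp f U A B)#})"
| hAllNeg: "\<lbrakk> R \<notin> U; closed_trm t; dh n (\<Gamma> + {#(R, open_fm 0 t A)#}) \<rbrakk>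
       \<Longrightarrow> dh (Suc n) (\<Gamma> + {#(R, Forall U A)#})"
| hAllPos: "\<lbrakk> R \<in> U; x \<notin> fv_seq \<Gamma>; x \<notin> fv_fm A;
            dh n (\<Gamma> + {#(R, open_fm 0 (FVar x) A)#}) \<rbrakk>
       \<Longrightarrow> dh (Suc n) (\<Gamma> + {#(R, Forall U A)#})"

lemma dh_der: "dh n G \<Longrightarrow> derivable G"
  by (induction rule: dh.induct) (rule derivable.intros; assumption)+

lemma der_dh: "derivable G \<Longrightarrow> \<exists>n. dh n G"
  apply (induction rule: derivable.induct)
  by (blast intro: dh.intros)+

lemma der_iff: "derivable G \<longleftrightarrow> (\<exists>n. dh n G)"
  using dh_der der_dh by blast

lemma closed_st: "cv \<sigma> \<Longrightarrow> closed_trm t \<Longrightarrow> closed_trm (st \<sigma> t)"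
  by (simp add: closed_trm_def bvs_st)

lemma dhI:
  "dh n (add_mset (R, A) (add_mset (R, A) \<Gamma>)) \<Longrightarrow> dh (Suc n) (add_mset (R, A) \<Gamma>)"
  "dh n (add_mset (f -` R, A) \<Gamma>) \<Longrightarrow> dh (Suc n) (add_mset (R, Neg f A) \<Gamma>)"
  "R \<notin> U \<Longrightarrow> dh n (add_mset (R, A) \<Gamma>) \<Longrightarrow> dh (Suc n) (add_mset (R, Conj U A B) \<Gamma>)"
  "R \<notin> U \<Longrightarrow> dh n (add_mset (R, B) \<Gamma>) \<Longrightarrow> dh (Suc n) (add_mset (R, Conj U A B) \<Gamma>)"
  "R \<in> U \<Longrightarrow> dh n (add_mset (R, A) \<Gamma>) \<Longrightarrow> dh m (add_mset (R, B) \<Gamma>) \<Longrightarrow> dh (Suc (max n m)) (add_mset (R, Conj U A B) \<Gamma>)"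
  "R \<notin> U \<Longrightarrow> dh n (add_mset (f -` R, A) (add_mset (R, B) \<Gamma>)) \<Longrightarrow> dh (Suc n) (add_mset (R, Imp f U A B) \<Gamma>)"
  "R \<in> U \<Longrightarrow> dh n (add_mset (f -` R, A) \<Gamma>1) \<Longrightarrow> dh m (add_mset (R, B) \<Gamma>2) \<Longrightarrow> dh (Suc (max n m)) (add_mset (R, Imp f U A B) (\<Gamma>1 + \<Gamma>2))"
  "R \<notin> U \<Longrightarrow> closed_trm t \<Longrightarrow> dh n (add_mset (R, open_fm 0 t A) \<Gamma>) \<Longrightarrow> dh (Suc n) (add_mset (R, Forall U A) \<Gamma>)"
  "R \<in> U \<Longrightarrow> x \<notin> fv_seq \<Gamma> \<Longrightarrow> x \<notin> fv_fm A \<Longrightarrow> dh n (add_mset (R, open_fm 0 (FVar x) A) \<Gamma>) \<Longrightarrow> dh (Suc n) (add_mset (R, Forall U A) \<Gamma>)"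
  using dh.hWeaken[of n \<Gamma> R A] dh.hNegR[of n \<Gamma> f R A] dh.hConjNegL[of R U n \<Gamma> A B]
    dh.hConjNegR[of R U n \<Gamma> B A] dh.hConjPos[of R U n \<Gamma> A m B] dh.hImpNeg[of R U n \<Gamma> f A B]
    dh.hImpPos[of R U n \<Gamma>1 f A m \<Gamma>2 B] dh.hAllNeg[of R U t n \<Gamma> A] dh.hAllPos[of R U x \<Gamma> A n]
  by (simp_all add: add.commute add.left_commute)

lemma derI:
  "derivable (add_mset (R, A) (add_mset (R, A) \<Gamma>)) \<Longrightarrow> derivable (add_mset (R, A) \<Gamma>)"
  "derivable (add_mset (f -` R, A) \<Gamma>) \<Longrightarrow> derivable (add_mset (R, Neg f A) \<Gamma>)"
  "R \<notin> U \<Longrightarrow> derivable (add_mset (R, A) \<Gamma>) \<Longrightarrow> derivable (add_mset (R, Conj U A B) \<Gamma>)"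
  "R \<notin> U \<Longrightarrow> derivable (add_mset (R, B) \<Gamma>) \<Longrightarrow> derivable (add_mset (R, Conj U A B) \<Gamma>)"
  "R \<in> U \<Longrightarrow> derivable (add_mset (R, A) \<Gamma>) \<Longrightarrow> derivable (add_mset (R, B) \<Gamma>) \<Longrightarrow> derivable (add_mset (R, Conj U A B) \<Gamma>)"
  "R \<notin> U \<Longrightarrow> derivable (add_mset (f -` R, A) (add_mset (R, B) \<Gamma>)) \<Longrightarrow> derivable (add_mset (R, Imp f U A B) \<Gamma>)"
  "R \<in> U \<Longrightarrow> derivable (add_mset (f -` R, A) \<Gamma>1) \<Longrightarrow> derivable (add_mset (R, B) \<Gamma>2) \<Longrightarrow> derivable (add_mset (R, Imp f U A B) (\<Gamma>1 + \<Gamma>2))"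
  "R \<notin> U \<Longrightarrow> closed_trm t \<Longrightarrow> derivable (add_mset (R, open_fm 0 t A) \<Gamma>) \<Longrightarrow> derivable (add_mset (R, Forall U A) \<Gamma>)"
  "R \<in> U \<Longrightarrow> x \<notin> fv_seq \<Gamma> \<Longrightarrow> x \<notin> fv_fm A \<Longrightarrow> derivable (add_mset (R, open_fm 0 (FVar x) A) \<Gamma>) \<Longrightarrow> derivable (add_mset (R, Forall U A) \<Gamma>)"
  using derivable.Weaken[of \<Gamma> R A] derivable.NegR[of \<Gamma> f R A] derivable.ConjNegL[of R U \<Gamma> A B]
    derivable.ConjNegR[of R U \<Gamma> B A] derivable.ConjPos[of R U \<Gamma> A B] derivable.ImpNeg[of R U \<Gamma> f A B]
    derivable.ImpPos[of R U \<Gamma>1 f A \<Gamma>2 B] derivable.AllNeg[of R U t \<Gamma> A] derivable.AllPos[of R U x \<Gamma> A]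
  by (simp_all add: add.commute add.left_commute)

lemma dh_subst: "dh n G \<Longrightarrow> cv \<sigma> \<Longrightarrow> infinite (UNIV :: 'v set) \<Longrightarrow> dh n (ss (\<sigma> :: 'v \<Rightarrow> ('f,'v) trm) (G :: ('r,'f,'v,'p) seq))"
proof (induction arbitrary: \<sigma> rule: dh.induct)
  case (hId Rs n \<Gamma> p ts)
  have "ss \<sigma> (\<Gamma> + mset (map (\<lambda>R. (R, Atom p ts)) Rs)) = ss \<sigma> \<Gamma> + mset (map (\<lambda>R. (R, Atom p (map (st \<sigma>) ts))) Rs)"
    by (simp add: ss_def multiset.map_comp o_def)
  then show ?case using hId by (metis dh.hId)
next
  case (hAllNeg R U t n \<Gamma> A)
  have "dh n (add_mset (R, open_fm 0 (st \<sigma> t) (sf \<sigma> A)) (ss \<sigma> \<Gamma>))"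
    using hAllNeg.IH[OF hAllNeg.prems] by (simp add: sf_open hAllNeg.prems)
  then show ?case using hAllNeg by (auto intro!: dhI(8)[where t="st \<sigma> t"] closed_st)
next
  case (hAllPos R U x \<Gamma> A n)
  obtain z where z: "z \<notin> fv_seq (ss \<sigma> \<Gamma>) \<union> fv_fm (sf \<sigma> A)"
    using fresh_ex[OF hAllPos.prems(2)] finite_fv_seq finite_fv_fm by (metis finite_Un)
  define \<sigma>' where "\<sigma>' = \<sigma>(x := FVar z)"
  have cv': "cv \<sigma>'" using hAllPos.prems(1) by (simp add: cv_def \<sigma>'_def)
  have e1: "ss \<sigma>' \<Gamma> = ss \<sigma> \<Gamma>" using hAllPos.hyps(2) by (intro ss_cong) (auto simp: \<sigma>'_def)
  have e2: "sf \<sigma>' A = sf \<sigma> A" using hAllPos.hyps(3) by (intro sf_cong) (auto simp: \<sigma>'_def)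
  have "dh n (ss \<sigma>' (\<Gamma> + {#(R, open_fm 0 (FVar x) A)#}))" using hAllPos.IH[OF cv' hAllPos.prems(2)] .
  then have "dh n (ss \<sigma> \<Gamma> + {#(R, open_fm 0 (FVar z) (sf \<sigma> A))#})"
    using cv' e1 e2 by (simp add: sf_open \<sigma>'_def)
  then have "dh (Suc n) (ss \<sigma> \<Gamma> + {#(R, Forall U (sf \<sigma> A))#})"
    using z hAllPos.hyps(1) by (intro dh.hAllPos[where x=z]) auto
  then show ?case by simp
qed (auto intro: dhI simp: sf_open closed_st)


lemma dh_inst:
  assumes "dh n (add_mset (R, open_fm 0 (FVar x) B) G)" "x \<notin> fv_seq G" "x \<notin> fv_fm B"
    "closed_trm t" "infinite (UNIV :: 'v set)"
  shows "dh n (add_mset (R, open_fm 0 t B) (G :: ('r,'f,'v,'p) seq))"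
proof -
  have cv: "cv (FVar(x := t))" using assms(4) by (simp add: cv_def closed_trm_def)
  have "dh n (ss (FVar(x := t)) (add_mset (R, open_fm 0 (FVar x) B) G))"
    using dh_subst[OF assms(1) cv assms(5)] .
  then show ?thesis using assms(2,3) cv by (simp add: ss_fresh sf_open sf_fresh)
qed

lemma der_inst:
  assumes "derivable (add_mset (R, open_fm 0 (FVar x) B) G)" "x \<notin> fv_seq G" "x \<notin> fv_fm B"
    "closed_trm t" "infinite (UNIV :: 'v set)"
  shows "derivable (add_mset (R, open_fm 0 t B) (G :: ('r,'f,'v,'p) seq))"
proof -
  obtain n where "dh n (add_mset (R, open_fm 0 (FVar x) B) G)" using assms(1) der_dh by blast
  then show ?thesis using dh_inst[OF _ assms(2-5)] dh_der by blast
qed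

lemma dh_weak:
  assumes "dh n G" "infinite (UNIV::'v set)"
  shows "derivable (G + (H :: ('r,'f,'v,'p) seq))"
  using assms
proof (induction n arbitrary: G H rule: less_induct)
  case (less n)
  note IH = less.IH[OF _ _ less.prems(2)]
  from less.prems(1) show ?case
  proof (cases rule: dh.cases)
    case (hId Rs \<Gamma> p ts)
    then show ?thesis
      using derivable.Id[of Rs "\<Gamma> + H" p ts] by (simp add: ac_simps)
  next
    case (hImpPos R U m \<Gamma>1 f A k \<Gamma>2 B)
    have "derivable (add_mset (f -` R, A) \<Gamma>1 + H)" using hImpPos by (intro IH[of m]) auto
    moreover have "derivable (add_mset (R, B) \<Gamma>2 + {#})" using hImpPos by (intro IH[of k]) auto
    ultimately have "derivable (add_mset (R, Imp f U A B) ((\<Gamma>1 + H) + \<Gamma>2))"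
      using hImpPos by (intro derI(7)) auto
    then show ?thesis using hImpPos by (simp add: ac_simps)
  next
    case (hAllPos R U x \<Gamma> A m)
    obtain z where z: "z \<notin> fv_seq \<Gamma> \<union> fv_seq H \<union> fv_fm A"
      using fresh_ex[OF less.prems(2)] finite_fv_seq finite_fv_fm by (metis finite_Un)
    have "dh m (add_mset (R, open_fm 0 (FVar z) A) \<Gamma>)"
      by (rule dh_inst[where x=x]) (use hAllPos less.prems(2) in \<open>auto simp: closed_trm_def\<close>)
    then have "derivable (add_mset (R, open_fm 0 (FVar z) A) \<Gamma> + H)" using hAllPos by (intro IH[of m]) auto
    then have "derivable (add_mset (R, Forall U A) (\<Gamma> + H))" using hAllPos z by (intro derI(9)[where x=z]) auto
    then show ?thesis using hAllPos by simp
  next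
    case (hWeaken m \<Gamma> R A)
    have "derivable (add_mset (R, A) (add_mset (R, A) \<Gamma>) + H)" using hWeaken by (intro IH[of m]) auto
    then show ?thesis using hWeaken derI(1)[of R A "\<Gamma> + H"] by simp
  next
    case (hNegR m \<Gamma> f R A)
    have "derivable (add_mset (f -` R, A) \<Gamma> + H)" using hNegR by (intro IH[of m]) auto
    then show ?thesis using hNegR derI(2)[of f R A "\<Gamma> + H"] by simp
  next
    case (hConjNegL R U m \<Gamma> A B)
    have "derivable (add_mset (R, A) \<Gamma> + H)" using hConjNegL by (intro IH[of m]) auto
    then show ?thesis using hConjNegL derI(3)[of R U A "\<Gamma> + H" B] by simp
  next
    case (hConjNegR R U m \<Gamma> B A)
    have "derivable (add_mset (R, B) \<Gamma> + H)" using hConjNegR by (intro IH[of m]) auto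
    then show ?thesis using hConjNegR derI(4)[of R U B "\<Gamma> + H" A] by simp
  next
    case (hConjPos R U m \<Gamma> A k B)
    have "derivable (add_mset (R, A) \<Gamma> + H)" using hConjPos by (intro IH[of m]) auto
    moreover have "derivable (add_mset (R, B) \<Gamma> + H)" using hConjPos by (intro IH[of k]) auto
    ultimately show ?thesis using hConjPos derI(5)[of R U A "\<Gamma> + H" B] by simp
  next
    case (hImpNeg R U m \<Gamma> f A B)
    have "derivable (add_mset (f -` R, A) (add_mset (R, B) \<Gamma>) + H)" using hImpNeg by (intro IH[of m]) auto
    then show ?thesis using hImpNeg derI(6)[of R U f A B "\<Gamma> + H"] by simp
  next
    case (hAllNeg R U t m \<Gamma> A)
    have "derivable (add_mset (R, open_fm 0 t A) \<Gamma> + H)" using hAllNeg by (intro IH[of m]) auto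
    then show ?thesis using hAllNeg derI(8)[of R U t A "\<Gamma> + H"] by simp
  qed
qed

lemma der_weak: "derivable G \<Longrightarrow> infinite (UNIV::'v set) \<Longrightarrow> derivable (G + (H :: ('r,'f,'v,'p) seq))"
  using der_dh dh_weak by blast

lemma der_contr: "derivable (X + Y) \<Longrightarrow> set_mset Y \<subseteq> set_mset X \<Longrightarrow> derivable X"
proof (induction Y)
  case empty then show ?case by simp
next
  case (add y Y)
  obtain X' where X': "X = add_mset y X'" using add.prems(2) multi_member_split[of y X] by auto
  have "derivable (add_mset y (add_mset y (X' + Y)))" using add.prems(1) X' by simp
  then have "derivable (add_mset y (X' + Y))" using derI(1)[of "fst y" "snd y" "X' + Y"] by simp
  then show ?case using add X' by simp
qed


fun pd :: "'r set list \<Rightarrow> bool" where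
  "pd [] = True"
| "pd (x # xs) = ((\<forall>y\<in>set xs. x \<inter> y = {}) \<and> pd xs)"

lemma pd_iff: "pd Rs \<longleftrightarrow> (\<forall>i<length Rs. \<forall>j<length Rs. i \<noteq> j \<longrightarrow> Rs ! i \<inter> Rs ! j = {})"
proof (induction Rs)
  case Nil then show ?case by simp
next
  case (Cons x xs)
  have "(\<forall>i<length (x#xs). \<forall>j<length (x#xs). i \<noteq> j \<longrightarrow> (x#xs) ! i \<inter> (x#xs) ! j = {}) \<longleftrightarrow>
        (\<forall>j<length xs. x \<inter> xs!j = {}) \<and> (\<forall>i<length xs. \<forall>j<length xs. i \<noteq> j \<longrightarrow> xs ! i \<inter> xs ! j = {})"
    (is "?L \<longleftrightarrow> ?R")
  proof
    assume L: ?L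
    show ?R
    proof (intro conjI allI impI)
      fix j assume "j < length xs" then show "x \<inter> xs!j = {}" using L[rule_format, of 0 "Suc j"] by simp
    next
      fix i j assume "i < length xs" "j < length xs" "i \<noteq> j" then show "xs!i \<inter> xs!j = {}"
        using L[rule_format, of "Suc i" "Suc j"] by simp
    qed
  next
    assume R: ?R
    show ?L
    proof (intro allI impI)
      fix i j assume "i < length (x#xs)" "j < length (x#xs)" "i \<noteq> j"
      then show "(x # xs) ! i \<inter> (x # xs) ! j = {}" using R by (cases i; cases j) (auto simp: Int_commute)
    qed
  qed
  then show ?case using Cons by (simp add: all_set_conv_all_nth)
qed

lemma pd_filter: "pd xs \<Longrightarrow> pd (filter P xs)"
  by (induction xs) auto

lemma pd_append: "pd (xs @ ys) \<longleftrightarrow> pd xs \<and> pd ys \<and> (\<forall>x\<in>set xs. \<forall>y\<in>set ys. x \<inter> y = {})"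
  by (induction xs) auto

lemma pd_mem: "pd xs \<Longrightarrow> x \<in> set xs \<Longrightarrow> y \<in> set xs \<Longrightarrow> x \<noteq> y \<Longrightarrow> x \<inter> y = {}"
  by (induction xs) (auto simp: Int_commute)

lemma uf_compl: "ultrafilter_on_roles U \<Longrightarrow> -R1 \<inter> -R2 = {} \<Longrightarrow> R1 \<notin> U \<Longrightarrow> R2 \<in> U"
  unfolding ultrafilter_on_roles_def by (metis empty_subsetI)

lemma uf_int: "ultrafilter_on_roles U \<Longrightarrow> R1 \<in> U \<Longrightarrow> R2 \<in> U \<Longrightarrow> R1 \<inter> R2 \<in> U"
  unfolding ultrafilter_on_roles_def by blast

lemma uf_up: "ultrafilter_on_roles U \<Longrightarrow> R1 \<inter> R2 \<in> U \<Longrightarrow> R1 \<in> U \<and> R2 \<in> U"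
  unfolding ultrafilter_on_roles_def by (meson Int_lower1 Int_lower2)

fun sz :: "('r, 'f, 'v, 'p) fm \<Rightarrow> nat" where
  "sz (Atom p ts) = 1"
| "sz (Neg f A) = Suc (sz A)"
| "sz (Conj U A B) = Suc (sz A + sz B)"
| "sz (Imp f U A B) = Suc (sz A + sz B)"
| "sz (Forall U A) = Suc (sz A)"

lemma sz_open[simp]: "sz (open_fm k t A) = sz A"
  by (induction A arbitrary: k) auto

lemma bvs_open_trm: "bvs_trm (open_trm k u t) \<subseteq> (bvs_trm t - {k}) \<union> bvs_trm u"
  by (induction t) auto

lemma lc_open: "lc_at (Suc k) B \<Longrightarrow> bvs_trm t = {} \<Longrightarrow> lc_at k (open_fm k t B)"
proof (induction B arbitrary: k)
  case (Atom p ts)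
  show ?case
  proof (simp, intro ballI)
    fix s i assume "s \<in> set ts" "i \<in> bvs_trm (open_trm k t s)"
    then show "i < k" using Atom bvs_open_trm[of k t s] by fastforce
  qed
qed auto

lemma ultra_open: "ultra_fm (open_fm k t B) = ultra_fm B"
  by (induction B arbitrary: k) auto

lemma wf_open: "wf_fm (Forall U B) \<Longrightarrow> closed_trm t \<Longrightarrow> wf_fm (open_fm 0 t B)"
  by (simp add: wf_fm_def lc_open closed_trm_def ultra_open)

fun pr :: "('r, 'f, 'v, 'p) seq \<Rightarrow> 'r set \<Rightarrow> ('r, 'f, 'v, 'p) fm \<Rightarrow> bool" where
  "pr G R (Atom p ts) = (\<exists>Rs. R \<in> set Rs \<and> pd Rs \<and> \<Union> (set Rs) = UNIV \<and>
       (\<forall>S\<in>set Rs. S \<noteq> R \<longrightarrow> (S, Atom p ts) \<in># G))"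
| "pr G R (Neg f B) = derivable (add_mset (f -` R, B) G)"
| "pr G R (Conj U B C) = (if R \<in> U then derivable (add_mset (R, B) G) \<and> derivable (add_mset (R, C) G)
       else derivable (add_mset (R, B) G) \<or> derivable (add_mset (R, C) G))"
| "pr G R (Imp f U B C) = (if R \<in> U then (\<exists>Ga Gb. G = Ga + Gb \<and> derivable (add_mset (f -` R, B) Ga)
          \<and> derivable (add_mset (R, C) Gb))
       else derivable (add_mset (f -` R, B) (add_mset (R, C) G)))"
| "pr G R (Forall U B) = (if R \<in> U then (\<forall>t. closed_trm t \<longrightarrow> derivable (add_mset (R, open_fm 0 t B) G))
       else (\<exists>t. closed_trm t \<and> derivable (add_mset (R, open_fm 0 t B) G)))"

lemma pr_der:
  assumes "pr G R A" "infinite (UNIV :: 'v set)"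
  shows "derivable (add_mset (R, A) (G :: ('r,'f,'v,'p) seq))"
  using assms
proof (cases A)
  case (Atom p ts)
  then obtain Rs where Rs: "R \<in> set Rs" "pd Rs" "\<Union> (set Rs) = UNIV"
      "\<forall>S\<in>set Rs. S \<noteq> R \<longrightarrow> (S, Atom p ts) \<in># G" using assms by auto
  have "derivable (G + mset (map (\<lambda>R. (R, Atom p ts)) Rs))"
    using Rs by (intro derivable.Id) (auto simp: pd_iff[symmetric])
  then have "derivable (add_mset (R, A) G + mset (map (\<lambda>R. (R, Atom p ts)) Rs))"
    using der_weak[OF _ assms(2), of _ "{#(R, A)#}"] by (simp add: ac_simps)
  then show ?thesis
    by (rule der_contr) (use Rs Atom in auto)
next
  case (Forall U B)
  show ?thesis
  proof (cases "R \<in> U")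
    case True
    obtain z where z: "z \<notin> fv_seq G \<union> fv_fm B"
      using fresh_ex[OF assms(2)] finite_fv_seq finite_fv_fm by (metis finite_Un)
    have "derivable (add_mset (R, open_fm 0 (FVar z) B) G)" using assms Forall True
      by (simp add: closed_trm_def)
    then show ?thesis using Forall True z derI(9)[of R U z G B] by simp
  next
    case False then show ?thesis using assms Forall derI(8)[of R U _ B G] by auto
  qed
next
  case (Imp f U B C)
  show ?thesis
  proof (cases "R \<in> U")
    case True
    then obtain Ga Gb where "G = Ga + Gb" "derivable (add_mset (f -` R, B) Ga)"
      "derivable (add_mset (R, C) Gb)" using assms Imp by auto
    then show ?thesis using Imp True derI(7)[of R U f B Ga C Gb] by simp
  next
    case False then show ?thesis using assms Imp derI(6)[of R U f B C G] by auto
  qed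
next
  case (Conj U B C)
  then show ?thesis using assms derI(3)[of R U B G C] derI(4)[of R U C G B] derI(5)[of R U B G C]
    by (auto split: if_splits)
qed (auto intro: derI(2))


lemma der_weak': "derivable (add_mset x G) \<Longrightarrow> infinite (UNIV::'v set) \<Longrightarrow> derivable (add_mset x (G + (H :: ('r,'f,'v,'p) seq)))"
  using der_weak[of "add_mset x G" H] by simp

lemma pr_weak:
  assumes "pr G R A" "infinite (UNIV :: 'v set)"
  shows "pr (G + H) R (A :: ('r,'f,'v,'p) fm)"
proof (cases A)
  case (Imp f U B C)
  show ?thesis
  proof (cases "R \<in> U")
    case True
    then obtain Ga Gb where "G = Ga + Gb" "derivable (add_mset (f -` R, B) Ga)"
      "derivable (add_mset (R, C) Gb)" using assms Imp by auto
    moreover have "G + H = Ga + (Gb + H)" using \<open>G = Ga + Gb\<close> by (simp add: ac_simps)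
    ultimately show ?thesis using Imp True der_weak'[OF _ assms(2), of "(R, C)" Gb H]
      by (simp only: pr.simps if_True) blast
  next
    case False then show ?thesis using assms Imp der_weak[OF _ assms(2), of "add_mset (f -` R, B) (add_mset (R, C) G)" H] by auto
  qed
next
  case (Forall U B)
  show ?thesis
  proof (cases "R \<in> U")
    case False
    then obtain t where "closed_trm t" "derivable (add_mset (R, open_fm 0 t B) G)" using assms Forall by auto
    moreover have "derivable (add_mset (R, open_fm 0 t B) (G + H))" using der_weak'[OF _ assms(2)] calculation(2) .
    ultimately show ?thesis using False Forall by auto
  qed (use assms Forall in \<open>auto intro: der_weak'[OF _ assms(2)]\<close>)
qed (use assms in \<open>auto intro: der_weak'[OF _ assms(2)]\<close>)

lemma comb_atom:
  assumes inf: "infinite (UNIV::'v set)" and dis: "-R1 \<inter> -R2 = {}"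
    and p1: "pr G1 R1 (Atom p ts)" and p2: "pr G2 R2 (Atom p ts)"
  shows "derivable (add_mset (R1 \<inter> R2, Atom p ts) (G1 + (G2 :: ('r,'f,'v,'p) seq)))"
proof -
  obtain Rs1 where R1: "R1 \<in> set Rs1" "pd Rs1" "\<Union> (set Rs1) = UNIV"
      "\<forall>S\<in>set Rs1. S \<noteq> R1 \<longrightarrow> (S, Atom p ts) \<in># G1" using p1 by auto
  obtain Rs2 where R2: "R2 \<in> set Rs2" "pd Rs2" "\<Union> (set Rs2) = UNIV"
      "\<forall>S\<in>set Rs2. S \<noteq> R2 \<longrightarrow> (S, Atom p ts) \<in># G2" using p2 by auto
  define L where "L = filter (\<lambda>S. S \<noteq> R1) Rs1 @ filter (\<lambda>S. S \<noteq> R2) Rs2"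
  have d1: "S \<inter> R1 = {}" if "S \<in> set Rs1" "S \<noteq> R1" for S using pd_mem[OF R1(2) that(1) R1(1) that(2)] .
  have d2: "S \<inter> R2 = {}" if "S \<in> set Rs2" "S \<noteq> R2" for S using pd_mem[OF R2(2) that(1) R2(1) that(2)] .
  have pdL: "pd ((R1 \<inter> R2) # L)"
  proof -
    have "\<forall>y\<in>set L. (R1 \<inter> R2) \<inter> y = {}" unfolding L_def using d1 d2 by auto
    moreover have "pd L" unfolding L_def pd_append
    proof (intro conjI pd_filter R1(2) R2(2) ballI)
      fix x y assume "x \<in> set (filter (\<lambda>S. S \<noteq> R1) Rs1)" "y \<in> set (filter (\<lambda>S. S \<noteq> R2) Rs2)"
      then have "x \<subseteq> -R1" "y \<subseteq> -R2" using d1 d2 by auto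
      then show "x \<inter> y = {}" using dis by blast
    qed
    ultimately show ?thesis by simp
  qed
  have unL: "\<Union> (set ((R1 \<inter> R2) # L)) = UNIV"
  proof (rule set_eqI, simp)
    fix r
    show "r \<in> R1 \<and> r \<in> R2 \<or> (\<exists>S\<in>set L. r \<in> S)"
    proof (cases "r \<in> R1")
      case False
      then obtain S where "S \<in> set Rs1" "r \<in> S" using R1(3) by blast
      then show ?thesis using False unfolding L_def by auto
    next
      case True
      show ?thesis
      proof (cases "r \<in> R2")
        case False
        then obtain S where "S \<in> set Rs2" "r \<in> S" using R2(3) by blast
        then show ?thesis using False unfolding L_def by auto
      qed (use True in auto)
    qed
  qed
  have "derivable ((G1 + G2) + mset (map (\<lambda>R. (R, Atom p ts)) ((R1 \<inter> R2) # L)))"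
    by (rule derivable.Id) (simp, rule pdL[unfolded pd_iff], rule unL)
  then have "derivable (add_mset (R1 \<inter> R2, Atom p ts) (G1 + G2) + mset (map (\<lambda>R. (R, Atom p ts)) L))"
    by simp
  then show ?thesis
    by (rule der_contr) (use R1(4) R2(4) in \<open>auto simp: L_def\<close>)
qed


lemma comb:
  assumes inf: "infinite (UNIV::'v set)" and wf: "wf_fm A" and dis: "-R1 \<inter> -R2 = {}"
    and p1: "pr G1 R1 A" and p2: "pr G2 R2 A"
    and IHc: "\<And>A' G1 G2 R1 R2. sz A' < sz A \<Longrightarrow> wf_fm A' \<Longrightarrow> -R1 \<inter> -R2 = {} \<Longrightarrow>
       derivable (add_mset (R1, A') G1) \<Longrightarrow> derivable (add_mset (R2, A') G2) \<Longrightarrow>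
       derivable (add_mset (R1 \<inter> R2, A') (G1 + (G2 :: ('r,'f,'v,'p) seq)))"
  shows "derivable (add_mset (R1 \<inter> R2, A) (G1 + (G2 :: ('r,'f,'v,'p) seq)))"
proof (cases A)
  case (Atom p ts)
  then show ?thesis using comb_atom[OF inf dis] p1 p2 by simp
next
  case (Neg f B)
  have wB: "wf_fm B" using wf Neg by (simp add: wf_fm_def)
  have d: "- (f -` R1) \<inter> - (f -` R2) = {}" using dis by auto
  have "derivable (add_mset (f -` R1 \<inter> f -` R2, B) (G1 + G2))"
    using IHc[of B, OF _ wB d] p1 p2 Neg by simp
  then show ?thesis using Neg derI(2)[of f "R1 \<inter> R2" B "G1 + G2"] by (simp add: vimage_Int)
next
  case (Conj U B C)
  have wB: "wf_fm B" "wf_fm C" and uf: "ultrafilter_on_roles U" using wf Conj by (auto simp: wf_fm_def)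
  have sB: "sz B < sz A" "sz C < sz A" using Conj by auto
  note cB = IHc[OF sB(1) wB(1) dis] and cC = IHc[OF sB(2) wB(2) dis]
  show ?thesis
  proof (cases "R1 \<inter> R2 \<in> U")
    case True
    then have u: "R1 \<in> U" "R2 \<in> U" using uf_up[OF uf True] by auto
    have q1: "derivable (add_mset (R1, B) G1)" "derivable (add_mset (R1, C) G1)" using p1 u Conj by auto
    have q2: "derivable (add_mset (R2, B) G2)" "derivable (add_mset (R2, C) G2)" using p2 u Conj by auto
    show ?thesis unfolding Conj
      by (rule derI(5)[OF True cB[OF q1(1) q2(1)] cC[OF q1(2) q2(2)]])
  next
    case False
    have M: "derivable (add_mset (R1 \<inter> R2, Conj U B C) (G1 + G2))"
      if q1: "derivable (add_mset (R1, B) G1) \<and> derivable (add_mset (R1, C) G1)"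
      and q2: "derivable (add_mset (R2, B) G2) \<or> derivable (add_mset (R2, C) G2)"
    proof (cases "derivable (add_mset (R2, B) G2)")
      case True
      from q1 have "derivable (add_mset (R1, B) G1)" by (rule conjunct1)
      from derI(3)[OF False cB[OF this True]] show ?thesis .
    next
      case F: False
      then have "derivable (add_mset (R2, C) G2)" using q2 by blast
      moreover from q1 have "derivable (add_mset (R1, C) G1)" by (rule conjunct2)
      ultimately show ?thesis using derI(4)[OF False cC] by blast
    qed
    have M2: "derivable (add_mset (R1 \<inter> R2, Conj U B C) (G1 + G2))"
      if q1: "derivable (add_mset (R1, B) G1) \<or> derivable (add_mset (R1, C) G1)"
      and q2: "derivable (add_mset (R2, B) G2) \<and> derivable (add_mset (R2, C) G2)"
    proof (cases "derivable (add_mset (R1, B) G1)")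
      case True
      from q2 have "derivable (add_mset (R2, B) G2)" by (rule conjunct1)
      from derI(3)[OF False cB[OF True this]] show ?thesis .
    next
      case F: False
      then have "derivable (add_mset (R1, C) G1)" using q1 by blast
      moreover from q2 have "derivable (add_mset (R2, C) G2)" by (rule conjunct2)
      ultimately show ?thesis using derI(4)[OF False cC] by blast
    qed
    show ?thesis
    proof (cases "R1 \<in> U")
      case True
      then have "R2 \<notin> U" using False uf_int[OF uf] by auto
      show ?thesis unfolding Conj by (rule M) (use p1 p2 Conj True \<open>R2 \<notin> U\<close> in auto)
    next
      case F1: False
      then have "R2 \<in> U" using uf_compl[OF uf dis] by auto
      show ?thesis unfolding Conj by (rule M2) (use p1 p2 Conj F1 \<open>R2 \<in> U\<close> in auto)
    qed
  qed
next
  case (Imp f U B C)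
  have wB: "wf_fm B" "wf_fm C" and uf: "ultrafilter_on_roles U" using wf Imp by (auto simp: wf_fm_def)
  have sB: "sz B < sz A" "sz C < sz A" using Imp by auto
  have d: "- (f -` R1) \<inter> - (f -` R2) = {}" using dis by auto
  note cB = IHc[OF sB(1) wB(1) d] and cC = IHc[OF sB(2) wB(2) dis]
  show ?thesis
  proof (cases "R1 \<inter> R2 \<in> U")
    case True
    then have "R1 \<in> U" "R2 \<in> U" using uf_up[OF uf True] by auto
    then obtain G1a G1b G2a G2b where g: "G1 = G1a + G1b" "G2 = G2a + G2b"
      "derivable (add_mset (f -` R1, B) G1a)" "derivable (add_mset (R1, C) G1b)"
      "derivable (add_mset (f -` R2, B) G2a)" "derivable (add_mset (R2, C) G2b)"
      using p1 p2 Imp by auto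
    have "derivable (add_mset (f -` (R1 \<inter> R2), B) (G1a + G2a))" using cB[OF g(3) g(5)] by (simp add: vimage_Int)
    moreover have "derivable (add_mset (R1 \<inter> R2, C) (G1b + G2b))" using cC[OF g(4) g(6)] .
    ultimately have "derivable (add_mset (R1 \<inter> R2, Imp f U B C) ((G1a + G2a) + (G1b + G2b)))"
      using True by (rule derI(7)[rotated])
    then show ?thesis using g Imp by (simp add: ac_simps)
  next
    case False
    show ?thesis
    proof (cases "R1 \<in> U")
      case True
      then have n2: "R2 \<notin> U" using False uf_int[OF uf True] by auto
      obtain G1a G1b where g: "G1 = G1a + G1b"
        "derivable (add_mset (f -` R1, B) G1a)" "derivable (add_mset (R1, C) G1b)"
        using p1 Imp True by auto
      have h2: "derivable (add_mset (f -` R2, B) (add_mset (R2, C) G2))" using p2 Imp n2 by auto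
      have "derivable (add_mset (f -` R1 \<inter> f -` R2, B) (G1a + add_mset (R2, C) G2))"
        using cB[OF g(2) h2] .
      then have "derivable (add_mset (R2, C) (add_mset (f -` (R1 \<inter> R2), B) (G1a + G2)))"
        by (simp add: vimage_Int add_mset_commute)
      from cC[OF g(3) this]
      have "derivable (add_mset (R1 \<inter> R2, C) (G1b + add_mset (f -` (R1 \<inter> R2), B) (G1a + G2)))" .
      then have "derivable (add_mset (f -` (R1 \<inter> R2), B) (add_mset (R1 \<inter> R2, C) (G1 + G2)))"
        using g by (simp add: ac_simps add_mset_commute)
      then show ?thesis using Imp False derI(6)[of "R1 \<inter> R2" U f B C "G1 + G2"] by simp
    next
      case F1: False
      then have n2: "R2 \<in> U" using uf_compl[OF uf dis] by auto
      obtain G2a G2b where g: "G2 = G2a + G2b"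
        "derivable (add_mset (f -` R2, B) G2a)" "derivable (add_mset (R2, C) G2b)"
        using p2 Imp n2 by auto
      have h1: "derivable (add_mset (f -` R1, B) (add_mset (R1, C) G1))" using p1 Imp F1 by auto
      have "derivable (add_mset (f -` R1 \<inter> f -` R2, B) (add_mset (R1, C) G1 + G2a))"
        using cB[OF h1 g(2)] .
      then have "derivable (add_mset (R1, C) (add_mset (f -` (R1 \<inter> R2), B) (G1 + G2a)))"
        by (simp add: vimage_Int add_mset_commute)
      from cC[OF this g(3)]
      have "derivable (add_mset (R1 \<inter> R2, C) (add_mset (f -` (R1 \<inter> R2), B) (G1 + G2a) + G2b))" .
      then have "derivable (add_mset (f -` (R1 \<inter> R2), B) (add_mset (R1 \<inter> R2, C) (G1 + G2)))"
        using g by (simp add: ac_simps add_mset_commute)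
      then show ?thesis using Imp False derI(6)[of "R1 \<inter> R2" U f B C "G1 + G2"] by simp
    qed
  qed
next
  case (Forall U B)
  have uf: "ultrafilter_on_roles U" using wf Forall by (auto simp: wf_fm_def)
  have wB: "closed_trm t \<Longrightarrow> wf_fm (open_fm 0 t B)" for t using wf_open wf Forall by blast
  have sB: "sz (open_fm 0 t B) < sz A" for t using Forall by auto
  note cB = IHc[OF sB wB dis]
  show ?thesis
  proof (cases "R1 \<in> U \<and> R2 \<in> U")
    case True
    then have I: "R1 \<inter> R2 \<in> U" using uf_int[OF uf] by auto
    obtain z where z: "z \<notin> fv_seq G1 \<union> fv_seq G2 \<union> fv_fm B"
      using fresh_ex[OF inf] finite_fv_seq finite_fv_fm by (metis finite_Un)
    have cz: "closed_trm (FVar z)" by (simp add: closed_trm_def)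
    have "derivable (add_mset (R1, open_fm 0 (FVar z) B) G1)" "derivable (add_mset (R2, open_fm 0 (FVar z) B) G2)"
      using p1 p2 True Forall cz by auto
    then have "derivable (add_mset (R1 \<inter> R2, open_fm 0 (FVar z) B) (G1 + G2))" using cB[OF cz] by blast
    then show ?thesis using Forall I z derI(9)[of "R1 \<inter> R2" U z "G1 + G2" B] by simp
  next
    case False
    then have N: "R1 \<inter> R2 \<notin> U" using uf_up[OF uf] by blast
    show ?thesis
    proof (cases "R1 \<in> U")
      case True
      then have n2: "R2 \<notin> U" using False by auto
      then obtain t where t: "closed_trm t" "derivable (add_mset (R2, open_fm 0 t B) G2)" using p2 Forall by auto
      have "derivable (add_mset (R1, open_fm 0 t B) G1)" using p1 Forall True t by auto
      then have "derivable (add_mset (R1 \<inter> R2, open_fm 0 t B) (G1 + G2))" using cB[OF t(1)] t by blast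
      then show ?thesis using Forall N t derI(8)[of "R1 \<inter> R2" U t B "G1 + G2"] by simp
    next
      case F1: False
      then have n2: "R2 \<in> U" using uf_compl[OF uf dis] by auto
      obtain t where t: "closed_trm t" "derivable (add_mset (R1, open_fm 0 t B) G1)" using p1 Forall F1 by auto
      have "derivable (add_mset (R2, open_fm 0 t B) G2)" using p2 Forall n2 t by auto
      then have "derivable (add_mset (R1 \<inter> R2, open_fm 0 t B) (G1 + G2))" using cB[OF t(1)] t by blast
      then show ?thesis using Forall N t derI(8)[of "R1 \<inter> R2" U t B "G1 + G2"] by simp
    qed
  qed
qed


lemma ms_split: "A + B = C + (D :: 'a multiset) \<Longrightarrow> \<exists>A1 A2 B1 B2. A = A1 + A2 \<and> B = B1 + B2 \<and> C = A1 + B1 \<and> D = A2 + B2"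
proof -
  assume e: "A + B = C + D"
  define A2 where "A2 = A \<inter># D"
  define B2 where "B2 = D - A2"
  define A1 where "A1 = A - A2"
  define B1 where "B1 = B - B2"
  have c: "count A x + count B x = count C x + count D x" for x using e by (metis count_union)
  have "A = A1 + A2" unfolding multiset_eq_iff A1_def A2_def by (simp add: min_def)
  moreover have "B = B1 + B2" unfolding multiset_eq_iff B1_def B2_def A2_def
  proof
    fix x show "count B x = count (B - (D - A \<inter># D) + (D - A \<inter># D)) x" using c[of x] by (simp add: min_def)
  qed
  moreover have "C = A1 + B1" unfolding multiset_eq_iff A1_def B1_def B2_def A2_def
  proof
    fix x show "count C x = count (A - A \<inter># D + (B - (D - A \<inter># D))) x" using c[of x] by (simp add: min_def)
  qed
  moreover have "D = A2 + B2" unfolding multiset_eq_iff B2_def A2_def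
  proof
    fix x show "count D x = count (A \<inter># D + (D - A \<inter># D)) x" by (simp add: min_def)
  qed
  ultimately show ?thesis by blast
qed


lemma copies_sub: "\<forall>x\<in>#M. x = c \<Longrightarrow> M' \<subseteq># M \<Longrightarrow> \<forall>x\<in>#M'. x = c"
  by (meson mset_subset_eqD)

lemma one_prem:
  assumes eq: "G1 + M = \<Gamma> + {#c#}" and Mc: "\<forall>x\<in>#M. x = (R1, A)" and Mne: "M \<noteq> {#}"
    and pr: "dh k (\<Gamma> + P)" and kn: "k < n"
    and H: "\<forall>k G' M'. k < n \<longrightarrow> dh k (G' + M') \<longrightarrow> (\<forall>x\<in>#M'. x = (R1, A)) \<longrightarrow> derivable (G' + Th)"
  shows "(c = (R1, A) \<and> derivable (G1 + P + Th)) \<or>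
         (c \<noteq> (R1, A) \<and> (\<exists>G1'. G1 = add_mset c G1' \<and> derivable (G1' + P + Th)))"
proof (cases "c = (R1, A)")
  case True
  obtain m where "m \<in># M" using Mne by blast
  then have cM: "c \<in># M" using Mc True by auto
  have G: "\<Gamma> = G1 + (M - {#c#})" using eq cM
    by (metis add_diff_cancel_right' add_mset_add_single multi_member_split union_mset_add_mset_right)
  have "dh k ((G1 + P) + (M - {#c#}))" using pr G by (simp add: ac_simps)
  then have "derivable (G1 + P + Th)" using H[rule_format, OF kn] Mc by (meson in_diffD)
  then show ?thesis using True by blast
next
  case False
  then have cM: "c \<notin># M" using Mc by auto
  then have cG: "c \<in># G1" using eq by (metis add_mset_add_single union_iff union_single_eq_member)
  then obtain G1' where G1: "G1 = add_mset c G1'" by (metis multi_member_split)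
  have G: "\<Gamma> = G1' + M" using eq G1 by simp
  have "dh k ((G1' + P) + M)" using pr G by (simp add: ac_simps)
  then have "derivable (G1' + P + Th)" using H[rule_format, OF kn] Mc by blast
  then show ?thesis using False G1 by blast
qed


lemma ms_p: "G1 + M = \<Gamma> + {#c#} \<Longrightarrow> c \<in># M \<Longrightarrow> \<Gamma> = G1 + (M - {#c#})"
  by (metis add_diff_cancel_right' add_mset_add_single multi_member_split union_mset_add_mset_right)

lemma ms_np: "G1 + M = \<Gamma> + {#c#} \<Longrightarrow> c \<notin># M \<Longrightarrow> \<exists>G1'. G1 = add_mset c G1' \<and> \<Gamma> = G1' + M"
proof -
  assume eq: "G1 + M = \<Gamma> + {#c#}" and cM: "c \<notin># M"
  then have "c \<in># G1" by (metis add_mset_add_single union_iff union_single_eq_member)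
  then obtain G1' where G1: "G1 = add_mset c G1'" by (metis multi_member_split)
  then show ?thesis using eq by auto
qed

lemma sub_disj:
  assumes "X \<subseteq># G + M" "\<forall>x\<in>#X. x \<notin># M"
  shows "X \<subseteq># G"
  unfolding subseteq_mset_def
proof
  fix x
  show "count X x \<le> count G x"
  proof (cases "x \<in># X")
    case True
    then have "count M x = 0" using assms(2) by (simp add: count_eq_zero_iff)
    then show ?thesis using assms(1) by (metis add.right_neutral count_union subseteq_mset_def)
  next
    case False then show ?thesis by (simp add: not_in_iff)
  qed
qed

lemma analyze:
  assumes inf: "infinite (UNIV::'v set)"
    and d: "dh n (G1 + M)" and Mne: "M \<noteq> {#}" and Mc: "\<forall>x\<in>#M. x = (R1, A)"
    and H: "\<And>k G' M'. k < n \<Longrightarrow> dh k (G' + M') \<Longrightarrow> \<forall>x\<in>#M'. x = (R1, A) \<Longrightarrow> derivable (G' + Th)"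
  shows "derivable (G1 + Th) \<or> pr (G1 + Th + Th) R1 (A :: ('r,'f,'v,'p) fm)"
proof -
  have H2: "\<forall>k G' M'. k < n \<longrightarrow> dh k (G' + M') \<longrightarrow> (\<forall>x\<in>#M'. x = (R1, A)) \<longrightarrow> derivable (G' + Th)"
    using H by blast
  from d show ?thesis
proof (cases rule: dh.cases)
  case (hId Rs \<Gamma> p ts)
  show ?thesis
  proof (cases "A = Atom p ts \<and> R1 \<in> set Rs")
    case True
    then have eA: "A = Atom p ts" and R1s: "R1 \<in> set Rs" by auto
    have memG: "(S, Atom p ts) \<in># G1 + Th + Th" if "S \<in> set Rs" "S \<noteq> R1" for S
    proof -
      have "(S, Atom p ts) \<in># \<Gamma> + mset (map (\<lambda>R. (R, Atom p ts)) Rs)" using that(1) by simp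
      then have "(S, Atom p ts) \<in># G1 + M" using hId(1) by simp
      moreover have "(S, Atom p ts) \<notin># M"
      proof
        assume "(S, Atom p ts) \<in># M"
        then have "(S, Atom p ts) = (R1, A)" using Mc by blast
        then show False using that(2) by simp
      qed
      ultimately show ?thesis by simp
    qed
    have pdR: "pd Rs" using hId(3) by (simp add: pd_iff)
    have "pr (G1 + Th + Th) R1 (Atom p ts)" unfolding pr.simps
      by (intro exI[of _ Rs] conjI ballI impI R1s pdR hId(4) memG)
    then show ?thesis using eA by simp
  next
    case False
    define X where "X = mset (map (\<lambda>R. (R, Atom p ts :: ('r,'f,'v,'p) fm)) Rs)"
    have "\<forall>x\<in>#X. x \<notin># M" using False Mc unfolding X_def by auto
    moreover have "X \<subseteq># G1 + M" using hId(1) unfolding X_def by simp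
    ultimately have XG: "X \<subseteq># G1" by (rule sub_disj[rotated])
    have "derivable ((G1 - X + Th) + mset (map (\<lambda>R. (R, Atom p ts)) Rs))"
      by (rule derivable.Id[OF hId(2) hId(3) hId(4)])
    then have "derivable ((G1 - X) + X + Th)" unfolding X_def[symmetric] by (simp add: ac_simps)
    then have "derivable (G1 + Th)" using XG by (simp add: subset_mset.diff_add)
    then show ?thesis by blast
  qed
next
  case (hWeaken k \<Gamma> R B)
  have kn: "k < n" using hWeaken(1) by simp
  show ?thesis
  proof (cases "(R, B) \<in># M")
    case True
    have G: "\<Gamma> = G1 + (M - {#(R, B)#})" using ms_p[OF hWeaken(2) True] .
    have d1: "dh k (G1 + (M - {#(R, B)#} + {#(R, B), (R, B)#}))" using hWeaken(3) G by (simp add: ac_simps)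
    have "x = (R1, A)" if "x \<in># M - {#(R, B)#} + {#(R, B), (R, B)#}" for x
    proof -
      have "x \<in># M - {#(R, B)#} \<or> x = (R, B)" using that by auto
      then have "x \<in># M" using True by (auto dest: in_diffD)
      then show ?thesis using Mc by auto
    qed
    then have "derivable (G1 + Th)" using H[OF kn d1] by blast
    then show ?thesis by blast
  next
    case False
    obtain G1' where G1: "G1 = add_mset (R, B) G1'" "\<Gamma> = G1' + M" using ms_np[OF hWeaken(2) False] by blast
    have "dh k ((G1' + {#(R, B), (R, B)#}) + M)" using hWeaken(3) G1(2) by (simp add: ac_simps)
    from H[OF kn this Mc] have "derivable (add_mset (R, B) (add_mset (R, B) (G1' + Th)))" by simp
    then show ?thesis using G1(1) derI(1)[of R B "G1' + Th"] by simp
  qed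
next
  case (hNegR k \<Gamma> f R B)
  have kn: "k < n" using hNegR by simp
  from one_prem[OF hNegR(2) Mc Mne hNegR(3) kn H2] show ?thesis
  proof (elim disjE conjE exE)
    assume "(R, Neg f B) = (R1, A)" "derivable (G1 + {#(f -` R, B)#} + Th)"
    then have "pr (G1 + Th) R1 A" by (auto simp: ac_simps)
    then show ?thesis using pr_weak[OF _ inf] by blast
  next
    fix G1' assume "G1 = add_mset (R, Neg f B) G1'" "derivable (G1' + {#(f -` R, B)#} + Th)"
    then show ?thesis using derI(2)[of f R B "G1' + Th"] by simp
  qed
next
  case (hConjNegL R U k \<Gamma> B C)
  have kn: "k < n" using hConjNegL by simp
  from one_prem[OF hConjNegL(2) Mc Mne hConjNegL(4) kn H2] show ?thesis
  proof (elim disjE conjE exE)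
    assume "(R, Conj U B C) = (R1, A)" "derivable (G1 + {#(R, B)#} + Th)"
    then have "pr (G1 + Th) R1 A" using hConjNegL by (auto simp: ac_simps)
    then show ?thesis using pr_weak[OF _ inf] by blast
  next
    fix G1' assume "G1 = add_mset (R, Conj U B C) G1'" "derivable (G1' + {#(R, B)#} + Th)"
    then show ?thesis using derI(3)[of R U B "G1' + Th" C] hConjNegL by simp
  qed
next
  case (hConjNegR R U k \<Gamma> C B)
  have kn: "k < n" using hConjNegR by simp
  from one_prem[OF hConjNegR(2) Mc Mne hConjNegR(4) kn H2] show ?thesis
  proof (elim disjE conjE exE)
    assume "(R, Conj U B C) = (R1, A)" "derivable (G1 + {#(R, C)#} + Th)"
    then have "pr (G1 + Th) R1 A" using hConjNegR by (auto simp: ac_simps)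
    then show ?thesis using pr_weak[OF _ inf] by blast
  next
    fix G1' assume "G1 = add_mset (R, Conj U B C) G1'" "derivable (G1' + {#(R, C)#} + Th)"
    then show ?thesis using derI(4)[of R U C "G1' + Th" B] hConjNegR by simp
  qed
next
  case (hConjPos R U k \<Gamma> B m C)
  have kn: "k < n" "m < n" using hConjPos by auto
  note o1 = one_prem[OF hConjPos(2) Mc Mne hConjPos(4) kn(1) H2]
  note o2 = one_prem[OF hConjPos(2) Mc Mne hConjPos(5) kn(2) H2]
  show ?thesis
  proof (cases "(R, Conj U B C) = (R1, A)")
    case True
    then have "pr (G1 + Th) R1 A" using o1 o2 hConjPos by (auto simp: ac_simps)
    then show ?thesis using pr_weak[OF _ inf] by blast
  next
    case False
    then obtain G1' where "G1 = add_mset (R, Conj U B C) G1'" "derivable (G1' + {#(R, B)#} + Th)" using o1 by blast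
    moreover obtain G1'' where "G1 = add_mset (R, Conj U B C) G1''" "derivable (G1'' + {#(R, C)#} + Th)" using o2 False by blast
    ultimately show ?thesis using derI(5)[of R U B "G1' + Th" C] hConjPos by simp
  qed
next
  case (hImpNeg R U k \<Gamma> f B C)
  have kn: "k < n" using hImpNeg by simp
  from one_prem[OF hImpNeg(2) Mc Mne hImpNeg(4) kn H2] show ?thesis
  proof (elim disjE conjE exE)
    assume "(R, Imp f U B C) = (R1, A)" "derivable (G1 + {#(f -` R, B), (R, C)#} + Th)"
    then have "pr (G1 + Th) R1 A" using hImpNeg by (auto simp: ac_simps)
    then show ?thesis using pr_weak[OF _ inf] by blast
  next
    fix G1' assume "G1 = add_mset (R, Imp f U B C) G1'" "derivable (G1' + {#(f -` R, B), (R, C)#} + Th)"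
    then show ?thesis using derI(6)[of R U f B C "G1' + Th"] hImpNeg by simp
  qed
next
  case (hAllNeg R U t k \<Gamma> B)
  have kn: "k < n" using hAllNeg by simp
  from one_prem[OF hAllNeg(2) Mc Mne hAllNeg(5) kn H2] show ?thesis
  proof (elim disjE conjE exE)
    assume "(R, Forall U B) = (R1, A)" "derivable (G1 + {#(R, open_fm 0 t B)#} + Th)"
    then have "pr (G1 + Th) R1 A" using hAllNeg by (auto simp: ac_simps)
    then show ?thesis using pr_weak[OF _ inf] by blast
  next
    fix G1' assume "G1 = add_mset (R, Forall U B) G1'" "derivable (G1' + {#(R, open_fm 0 t B)#} + Th)"
    then show ?thesis using derI(8)[of R U t B "G1' + Th"] hAllNeg by simp
  qed
next
  case (hAllPos R U x \<Gamma> B k)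
  have kn: "k < n" using hAllPos by simp
  obtain z where z: "z \<notin> fv_seq \<Gamma> \<union> fv_seq G1 \<union> fv_seq Th \<union> fv_fm B"
    using fresh_ex[OF inf] finite_fv_seq finite_fv_fm by (metis finite_Un)
  have "dh k (add_mset (R, open_fm 0 (FVar z) B) \<Gamma>)"
    by (rule dh_inst[where x=x]) (use hAllPos inf in \<open>auto simp: closed_trm_def\<close>)
  then have p': "dh k (\<Gamma> + {#(R, open_fm 0 (FVar z) B)#})" by simp
  from one_prem[OF hAllPos(2) Mc Mne p' kn H2] show ?thesis
  proof (elim disjE conjE exE)
    assume e: "(R, Forall U B) = (R1, A)" and dd: "derivable (G1 + {#(R, open_fm 0 (FVar z) B)#} + Th)"
    have "derivable (add_mset (R, open_fm 0 t B) (G1 + Th))" if "closed_trm t" for t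
      by (rule der_inst[where x=z]) (use dd z that inf in auto)
    then have "pr (G1 + Th) R1 A" using e hAllPos by auto
    then show ?thesis using pr_weak[OF _ inf] by blast
  next
    fix G1' assume e: "G1 = add_mset (R, Forall U B) G1'" and dd: "derivable (G1' + {#(R, open_fm 0 (FVar z) B)#} + Th)"
    have "derivable (add_mset (R, Forall U B) (G1' + Th))"
      by (rule derI(9)[where x=z]) (use dd z e hAllPos in auto)
    then show ?thesis using e by simp
  qed
next
  case (hImpPos R U k \<Gamma>a f B m \<Gamma>b C)
  have kn: "k < n" "m < n" using hImpPos(1) by auto
  show ?thesis
  proof (cases "(R, Imp f U B C) \<in># M")
    case True
    have G: "\<Gamma>a + \<Gamma>b = G1 + (M - {#(R, Imp f U B C)#})" using ms_p[OF hImpPos(2) True] .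
    obtain Xa Ma Xb Mb where s: "\<Gamma>a = Xa + Ma" "\<Gamma>b = Xb + Mb" "G1 = Xa + Xb"
        "M - {#(R, Imp f U B C)#} = Ma + Mb" using ms_split[OF G] by blast
    have inM: "x \<in># M" if "x \<in># Ma + Mb" for x
    proof -
      have "x \<in># M - {#(R, Imp f U B C)#}" using that s(4) by simp
      then show ?thesis by (rule in_diffD)
    qed
    have ca: "\<forall>x\<in>#Ma. x = (R1, A)" "\<forall>x\<in>#Mb. x = (R1, A)" using Mc inM by auto
    have "dh k ((Xa + {#(f -` R, B)#}) + Ma)" using hImpPos(4) s(1) by (simp add: ac_simps)
    from H[OF kn(1) this ca(1)] have da: "derivable (add_mset (f -` R, B) (Xa + Th))" by simp
    have "dh m ((Xb + {#(R, C)#}) + Mb)" using hImpPos(5) s(2) by (simp add: ac_simps)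
    from H[OF kn(2) this ca(2)] have db: "derivable (add_mset (R, C) (Xb + Th))" by simp
    have e: "(R, Imp f U B C) = (R1, A)" using True Mc by auto
    then have eR: "R1 = R" "A = Imp f U B C" by auto
    have eq: "G1 + Th + Th = (Xa + Th) + (Xb + Th)" using s(3) by (simp add: ac_simps)
    have "pr (G1 + Th + Th) R1 A" unfolding eR
      by (simp only: pr.simps if_P[OF hImpPos(3)]) (rule exI[of _ "Xa + Th"], rule exI[of _ "Xb + Th"], use eq da db in simp)
    then show ?thesis by blast
  next
    case False
    obtain G1' where G1: "G1 = add_mset (R, Imp f U B C) G1'" "\<Gamma>a + \<Gamma>b = G1' + M"
      using ms_np[OF hImpPos(2) False] by blast
    obtain Xa Ma Xb Mb where s: "\<Gamma>a = Xa + Ma" "\<Gamma>b = Xb + Mb" "G1' = Xa + Xb"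
        "M = Ma + Mb" using ms_split[OF G1(2)] by blast
    have ca: "\<forall>x\<in>#Ma. x = (R1, A)" "\<forall>x\<in>#Mb. x = (R1, A)" using Mc s(4) by auto
    have "dh k ((Xa + {#(f -` R, B)#}) + Ma)" using hImpPos(4) s(1) by (simp add: ac_simps)
    from H[OF kn(1) this ca(1)] have da: "derivable (add_mset (f -` R, B) (Xa + Th))" by simp
    have "dh m ((Xb + {#(R, C)#}) + Mb)" using hImpPos(5) s(2) by (simp add: ac_simps)
    from H[OF kn(2) this ca(2)] have db: "derivable (add_mset (R, C) (Xb + Th))" by simp
    have "derivable (add_mset (R, Imp f U B C) ((Xa + Th) + (Xb + Th)))"
      by (rule derI(7)[OF hImpPos(3) da db])
    then have "derivable ((G1 + Th) + Th)" using G1(1) s(3) by (simp add: ac_simps)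
    then have "derivable (G1 + Th)" by (rule der_contr) simp
    then show ?thesis by blast
  qed
qed
qed



lemma main_cut:
  assumes inf: "infinite (UNIV::'v set)" and wf: "wf_fm A" and dis: "-R1 \<inter> -R2 = {}"
    and IHc: "\<And>A' G1 G2 R1 R2. sz A' < sz A \<Longrightarrow> wf_fm A' \<Longrightarrow> -R1 \<inter> -R2 = {} \<Longrightarrow>
       derivable (add_mset (R1, A') G1) \<Longrightarrow> derivable (add_mset (R2, A') G2) \<Longrightarrow>
       derivable (add_mset (R1 \<inter> R2, A') (G1 + (G2 :: ('r,'f,'v,'p) seq)))"
  shows "dh n1 (G1 + M) \<Longrightarrow> dh n2 (G2 + N) \<Longrightarrow> M \<noteq> {#} \<Longrightarrow> \<forall>x\<in>#M. x = (R1, A) \<Longrightarrow>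
    N \<noteq> {#} \<Longrightarrow> \<forall>x\<in>#N. x = (R2, A) \<Longrightarrow>
    derivable (add_mset (R1 \<inter> R2, A) (G1 + (G2 :: ('r,'f,'v,'p) seq)))"
proof (induction "n1 + n2" arbitrary: n1 n2 G1 G2 M N rule: less_induct)
  case less
  define Th1 where "Th1 = add_mset (R1 \<inter> R2, A) G2"
  define Th2 where "Th2 = add_mset (R1 \<inter> R2, A) G1"
  have H1: "derivable (G' + Th1)" if k: "k < n1" "dh k (G' + M')" "\<forall>x\<in>#M'. x = (R1, A)" for k G' M'
  proof (cases "M' = {#}")
    case True then show ?thesis using dh_weak[OF _ inf, of k G' Th1] k(2) by simp
  next
    case False
    have "k + n2 < n1 + n2" using k(1) by simp
    from less.hyps[OF this k(2) less.prems(2) False k(3) less.prems(5) less.prems(6)]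
    show ?thesis unfolding Th1_def by simp
  qed
  have H2: "derivable (G' + Th2)" if k: "k < n2" "dh k (G' + N')" "\<forall>x\<in>#N'. x = (R2, A)" for k G' N'
  proof (cases "N' = {#}")
    case True then show ?thesis using dh_weak[OF _ inf, of k G' Th2] k(2) by simp
  next
    case False
    have "n1 + k < n1 + n2" using k(1) by simp
    from less.hyps[OF this less.prems(1) k(2) less.prems(3) less.prems(4) False k(3)]
    show ?thesis unfolding Th2_def by (simp add: ac_simps)
  qed
  note a1 = analyze[OF inf less.prems(1) less.prems(3) less.prems(4) H1]
  note a2 = analyze[OF inf less.prems(2) less.prems(5) less.prems(6) H2]
  show ?case
  proof (cases "derivable (G1 + Th1)")
    case True then show ?thesis unfolding Th1_def by simp
  next
    case F1: False
    show ?thesis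
    proof (cases "derivable (G2 + Th2)")
      case True then show ?thesis unfolding Th2_def by (simp add: ac_simps)
    next
      case F2: False
      have p1: "pr (G1 + Th1 + Th1) R1 A"
      proof (rule disjE[OF a1])
        assume "derivable (G1 + Th1)" then show ?thesis using F1 by contradiction
      qed
      have p2: "pr (G2 + Th2 + Th2) R2 A"
      proof (rule disjE[OF a2])
        assume "derivable (G2 + Th2)" then show ?thesis using F2 by contradiction
      qed
      have "derivable (add_mset (R1 \<inter> R2, A) ((G1 + Th1 + Th1) + (G2 + Th2 + Th2)))"
        by (rule comb[OF inf wf dis p1 p2 IHc])
      then have "derivable (add_mset (R1 \<inter> R2, A) (G1 + G2) + (Th1 + Th1 + Th2 + Th2))"
        by (simp add: ac_simps)
      then show ?thesis by (rule der_contr) (auto simp: Th1_def Th2_def)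
    qed
  qed
qed

lemma cut_all:
  assumes inf: "infinite (UNIV::'v set)"
  shows "wf_fm A \<Longrightarrow> -R1 \<inter> -R2 = {} \<Longrightarrow> derivable (add_mset (R1, A) G1) \<Longrightarrow>
    derivable (add_mset (R2, A) G2) \<Longrightarrow>
    derivable (add_mset (R1 \<inter> R2, A) (G1 + (G2 :: ('r,'f,'v,'p) seq)))"
proof (induction "sz A" arbitrary: A G1 G2 R1 R2 rule: less_induct)
  case less
  obtain n1 where n1: "dh n1 (G1 + {#(R1, A)#})" using less.prems(3) der_dh by fastforce
  obtain n2 where n2: "dh n2 (G2 + {#(R2, A)#})" using less.prems(4) der_dh by fastforce
  have IHc: "\<And>A' G1 G2 R1 R2. sz A' < sz A \<Longrightarrow> wf_fm A' \<Longrightarrow> -R1 \<inter> -R2 = {} \<Longrightarrow>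
       derivable (add_mset (R1, A') G1) \<Longrightarrow> derivable (add_mset (R2, A') G2) \<Longrightarrow>
       derivable (add_mset (R1 \<inter> R2, A') (G1 + (G2 :: ('r,'f,'v,'p) seq)))"
    using less.hyps by blast
  show ?case
    by (rule main_cut[OF inf less.prems(1,2) IHc n1 n2]) simp_all
qed

theorem mainTheorem5:
  fixes R1 R2 :: "'r set"
    and \<Gamma>1 \<Gamma>2 :: "('r, 'f, 'v, 'p) seq"
    and A :: "('r, 'f, 'v, 'p) fm"
  assumes "infinite (UNIV :: 'v set)"
    and "(- R1) \<inter> (- R2) = {}"
    and "wf_seq \<Gamma>1" and "wf_seq \<Gamma>2" and "wf_fm A"
    and "derivable (\<Gamma>1 + {#(R1, A)#})"
    and "derivable (\<Gamma>2 + {#(R2, A)#})"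
  shows "derivable (\<Gamma>1 + \<Gamma>2 + {#(R1 \<inter> R2, A)#})"
proof -
  have "derivable (add_mset (R1 \<inter> R2, A) (\<Gamma>1 + \<Gamma>2))"
    by (rule cut_all[OF assms(1) assms(5) assms(2)]) (use assms(6,7) in simp_all)
  then show ?thesis by simp
qed


end
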